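(* Let $\mathbb K\in\{\mathbb R,\mathbb C\}$, let $\mathbf u,\mathbf v$ be sequences of non-zero scalars, and let $m_{\mathbf u}=\bigotimes_{n\ge0}\mu_{n,\mathbf u}$ and $m_{\mathbf v}=\bigotimes_{n\ge0}\mu_{n,\mathbf v}$ be product probability measures on $\mathbb K^{\mathbb Z_+}$, $B_{\mathbf u}$-invariant and $B_{\mathbf v}$-invariant respectively, with $\mu_{0,\mathbf u}(\{0\})=0=\mu_{0,\mathbf v}(\{0\})$. Assume $m_{\mathbf u}$ and $m_{\mathbf v}$ are not mutually singular, and set $\lambda_n=\frac{u_1\cdots u_n}{v_1\cdots v_n}$ for $n\ge1$. (1) If there is $a\in\mathbb K\setminus\{0\}$ such that $\mu_{0,\mathbf v}(A)=\mu_{0,\mathbf u}(aA)$ for every Borel set $A\subseteq\mathbb K$, then $\sum_{n=1}^\infty(1-|a^{-1}\lambda_n|)^2<\infty$. (2) If $\int_{\mathbb K\setminus\{0\}}(\log|t|)^2\,d\mu_{0,\mathbf u}(t)<\infty$ and $\int_{\mathbb K\setminus\{0\}}(\log|t|)^2\,d\mu_{0,\mathbf v}(t)<\infty$, then there exists $a\in\mathbb K\setminus\{0\}$ such that $\sum_{n=1}^\infty(1-|a^{-1}\lambda_n|)^2<\infty$.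
   Context: $\mathbb K^{\mathbb Z_+}$ carries the product topology and Borel $\sigma$-algebra; $B_{\mathbf w}:\mathbb K^{\mathbb Z_+}\to\mathbb K^{\mathbb Z_+}$ is $(B_{\mathbf w}t)_j=w_{j+1}t_{j+1}$, and invariance means $\mu(B_{\mathbf w}^{-1}B)=\mu(B)$ for Borel $B$. *)

theory Defs
  imports "HOL-Probability.Probability"
begin

definition wshift :: "(nat \<Rightarrow> 'a::times) \<Rightarrow> (nat \<Rightarrow> 'a) \<Rightarrow> (nat \<Rightarrow> 'a)" where
  "wshift w t = (\<lambda>j. w (Suc j) * t (Suc j))"

definition shift_invariant ::
  "(nat \<Rightarrow> 'a::{times,topological_space}) \<Rightarrow> (nat \<Rightarrow> 'a) measure \<Rightarrow> bool" where
  "shift_invariant w m \<longleftrightarrow>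
     (\<forall>B \<in> sets borel. emeasure m (wshift w -` B) = emeasure m B)"

definition mutually_singular :: "'a measure \<Rightarrow> 'a measure \<Rightarrow> bool" where
  "mutually_singular M N \<longleftrightarrow>
     (\<exists>A \<in> sets M. emeasure M A = 0 \<and> emeasure N (space N - A) = 0)"

definition lam :: "(nat \<Rightarrow> 'a::field) \<Rightarrow> (nat \<Rightarrow> 'a) \<Rightarrow> nat \<Rightarrow> 'a" where
  "lam u v n = (\<Prod>i\<in>{1..n}. u i) / (\<Prod>i\<in>{1..n}. v i)"

definition thm611_setup ::
  "(nat \<Rightarrow> 'a::{field,topological_space}) \<Rightarrow> (nat \<Rightarrow> 'a) \<Rightarrow>
   (nat \<Rightarrow> 'a measure) \<Rightarrow> (nat \<Rightarrow> 'a measure) \<Rightarrow> bool" where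
  "thm611_setup u v \<mu>u \<mu>v \<longleftrightarrow>
     (\<forall>n\<ge>1. u n \<noteq> 0) \<and> (\<forall>n\<ge>1. v n \<noteq> 0) \<and>
     (\<forall>n. prob_space (\<mu>u n) \<and> sets (\<mu>u n) = sets borel) \<and>
     (\<forall>n. prob_space (\<mu>v n) \<and> sets (\<mu>v n) = sets borel) \<and>
     shift_invariant u (Pi\<^sub>M UNIV \<mu>u) \<and>
     shift_invariant v (Pi\<^sub>M UNIV \<mu>v) \<and>
     emeasure (\<mu>u 0) {0} = 0 \<and> emeasure (\<mu>v 0) {0} = 0 \<and>
     \<not> mutually_singular (Pi\<^sub>M UNIV \<mu>u) (Pi\<^sub>M UNIV \<mu>v)"

end

theory Submission
  imports Defs
begin

lemma PiM_int_single:
  fixes M :: "nat \<Rightarrow> 'a measure" and f :: "'a \<Rightarrow> real"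
  assumes M: "\<And>i. prob_space (M i)" and f[measurable]: "f \<in> borel_measurable (M i)"
  shows "(\<integral>t. f (t i) \<partial>PiM UNIV M) = (\<integral>x. f x \<partial>M i)"
proof -
  have "(\<integral>x. f x \<partial>M i) = (\<integral>x. f x \<partial>distr (PiM UNIV M) (M i) (\<lambda>\<omega>. \<omega> i))"
    using distr_PiM_component[of UNIV M i] M by simp
  also have "\<dots> = (\<integral>t. f (t i) \<partial>PiM UNIV M)"
    by (rule integral_distr) (auto simp: measurable_component_singleton)
  finally show ?thesis by simp
qed

lemma PiM_int_pair:
  fixes M :: "nat \<Rightarrow> 'a measure" and f g :: "'a \<Rightarrow> real"
  assumes M: "\<And>i. prob_space (M i)" and ij: "i \<noteq> j"
    and f[measurable]: "f \<in> borel_measurable (M i)" and g[measurable]: "g \<in> borel_measurable (M j)"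
    and fb: "\<And>x. x \<in> space (M i) \<Longrightarrow> \<bar>f x\<bar> \<le> B" and gb: "\<And>x. x \<in> space (M j) \<Longrightarrow> \<bar>g x\<bar> \<le> B"
  shows "(\<integral>t. f (t i) * g (t j) \<partial>PiM UNIV M) = (\<integral>x. f x \<partial>M i) * (\<integral>x. g x \<partial>M j)"
proof -
  define F where "F = (\<lambda>k. if k = i then f else g)"
  interpret PS: product_sigma_finite M
    unfolding product_sigma_finite_def using M prob_space_imp_sigma_finite by blast
  have Fm: "F k \<in> borel_measurable (M k)" if "k \<in> {i,j}" for k
    using that by (auto simp: F_def)
  have Fint: "integrable (M k) (F k)" if "k \<in> {i,j}" for k
  proof -
    interpret prob_space "M k" by (rule M)
    show ?thesis
      apply (rule integrable_const_bound[where B=B])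
      using that fb gb ij Fm by (auto simp: F_def)
  qed
  have D: "distr (PiM UNIV M) (PiM {i,j} M) (\<lambda>\<omega>. \<lambda>n\<in>{i,j}. \<omega> n) = PiM {i,j} M"
    using distr_PiM_reindex[of UNIV M id "{i,j}"] M by simp
  have "(\<integral>y. (\<Prod>k\<in>{i,j}. F k (y k)) \<partial>PiM {i,j} M) = (\<Prod>k\<in>{i,j}. integral\<^sup>L (M k) (F k))"
    by (rule PS.product_integral_prod) (auto intro: Fint)
  also have "\<dots> = (\<integral>x. f x \<partial>M i) * (\<integral>x. g x \<partial>M j)"
    using ij by (simp add: F_def)
  finally have 1: "(\<integral>y. (\<Prod>k\<in>{i,j}. F k (y k)) \<partial>PiM {i,j} M) = (\<integral>x. f x \<partial>M i) * (\<integral>x. g x \<partial>M j)" .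
  have hm: "(\<lambda>y. \<Prod>k\<in>{i,j}. F k (y k)) \<in> borel_measurable (PiM {i,j} M)"
    using Fm by (intro borel_measurable_prod) (auto intro: measurable_compose[OF measurable_component_singleton])
  have "(\<integral>y. (\<Prod>k\<in>{i,j}. F k (y k)) \<partial>PiM {i,j} M)
      = (\<integral>y. (\<Prod>k\<in>{i,j}. F k (y k)) \<partial>distr (PiM UNIV M) (PiM {i,j} M) (\<lambda>\<omega>. \<lambda>n\<in>{i,j}. \<omega> n))"
    using D by simp
  also have "\<dots> = (\<integral>t. (\<Prod>k\<in>{i,j}. F k ((\<lambda>n\<in>{i,j}. t n) k)) \<partial>PiM UNIV M)"
    apply (rule integral_distr)
    apply (rule measurable_restrict) apply (auto simp: measurable_component_singleton)[1]
    using hm by simp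
  also have "\<dots> = (\<integral>t. f (t i) * g (t j) \<partial>PiM UNIV M)"
    using ij by (simp add: F_def)
  finally show ?thesis using 1 by simp
qed

lemma bint:
  fixes h :: "'a \<Rightarrow> real"
  assumes "prob_space M" "h \<in> borel_measurable M" "\<And>x. x \<in> space M \<Longrightarrow> \<bar>h x\<bar> \<le> B"
  shows "integrable M h"
proof -
  interpret prob_space M by fact
  show ?thesis by (rule integrable_const_bound[where B=B]) (use assms in auto)
qed

lemma bint_le:
  fixes h :: "'a \<Rightarrow> real"
  assumes "prob_space M" "h \<in> borel_measurable M" "\<And>x. x \<in> space M \<Longrightarrow> \<bar>h x\<bar> \<le> B"
  shows "\<bar>integral\<^sup>L M h\<bar> \<le> B"
proof -
  interpret prob_space M by fact
  have "\<bar>integral\<^sup>L M h\<bar> \<le> integral\<^sup>L M (\<lambda>x. \<bar>h x\<bar>)"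
    using integral_abs_bound by blast
  also have "\<dots> \<le> integral\<^sup>L M (\<lambda>x. B)"
    by (rule integral_mono) (use assms bint[OF assms] in auto)
  also have "\<dots> = B" by (simp add: prob_space)
  finally show ?thesis .
qed

lemma sum_dev:
  fixes \<mu> :: "nat \<Rightarrow> 'a measure" and g :: "nat \<Rightarrow> 'a \<Rightarrow> real"
  assumes P: "\<And>n. prob_space (\<mu> n)" and gm[measurable]: "\<And>n. g n \<in> borel_measurable (\<mu> n)"
    and gb: "\<And>n x. \<bar>g n x\<bar> \<le> \<rho> n" and a: "a > 0"
  shows "measure (PiM UNIV \<mu>) {t \<in> space (PiM UNIV \<mu>). a \<le> \<bar>(\<Sum>n<N. g n (t n)) - (\<Sum>n<N. integral\<^sup>L (\<mu> n) (g n))\<bar>}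
     \<le> 4 * (\<Sum>n<N. (\<rho> n)\<^sup>2) / a\<^sup>2"
proof -
  define M where "M = PiM UNIV \<mu>"
  interpret M: prob_space M unfolding M_def by (rule prob_space_PiM) (use P in auto)
  define e where "e n = integral\<^sup>L (\<mu> n) (g n)" for n
  define Y where "Y n t = g n (t n) - e n" for n t
  have rpos: "\<rho> n \<ge> 0" for n using gb[of n undefined] by linarith
  have eb: "\<bar>e n\<bar> \<le> \<rho> n" for n unfolding e_def by (rule bint_le) (use P gb in auto)
  have Ym[measurable]: "Y n \<in> borel_measurable M" for n
    unfolding Y_def M_def by measurable
  have Yb: "\<bar>Y n t\<bar> \<le> 2 * \<rho> n" for n t
    using gb[of n "t n"] eb[of n] unfolding Y_def by auto
  have intg: "integrable M (\<lambda>t. g n (t n))" for n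
    by (rule bint[where B="\<rho> n"]) (auto simp: M_def gb intro: M.prob_space_axioms[unfolded M_def])
  have intY: "integrable M (Y n)" for n
    by (rule bint[where B="2*\<rho> n"]) (auto simp: Yb intro: M.prob_space_axioms)
  have intYY: "integrable M (\<lambda>t. Y n t * Y m t)" for n m
  proof (rule bint[where B="2*\<rho> n * (2 * \<rho> m)"])
    fix t
    have "\<bar>Y n t\<bar> * \<bar>Y m t\<bar> \<le> 2*\<rho> n * (2 * \<rho> m)"
      using Yb[of n t] Yb[of m t] by (intro mult_mono) auto
    then show "\<bar>Y n t * Y m t\<bar> \<le> 2*\<rho> n * (2 * \<rho> m)" by (simp add: abs_mult)
  qed (auto intro: M.prob_space_axioms)
  have Eg: "(\<integral>t. g n (t n) \<partial>M) = e n" for n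
    unfolding M_def e_def by (rule PiM_int_single) (use P in auto)
  have EY0: "(\<integral>x. g n x - e n \<partial>\<mu> n) = 0" for n
  proof -
    interpret prob_space "\<mu> n" by (rule P)
    have "(\<integral>x. g n x - e n \<partial>\<mu> n) = (\<integral>x. g n x \<partial>\<mu> n) - e n"
      by (subst Bochner_Integration.integral_diff) (auto intro!: bint[where B="\<rho> n"] P gb simp: prob_space.prob_space[OF P[of n]])
    then show ?thesis using prob_space.prob_space[OF P[of n]] by (simp add: e_def)
  qed
  have offd: "(\<integral>t. Y n t * Y m t \<partial>M) = 0" if "n \<noteq> m" for n m
  proof -
    have "(\<integral>t. Y n t * Y m t \<partial>M) = (\<integral>x. g n x - e n \<partial>\<mu> n) * (\<integral>x. g m x - e m \<partial>\<mu> m)"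
      unfolding Y_def M_def
    proof (rule PiM_int_pair[where B="2*\<rho> n + 2*\<rho> m"])
      fix x show "\<bar>g n x - e n\<bar> \<le> 2*\<rho> n + 2*\<rho> m"
        using gb[of n x] eb[of n] rpos[of m] by linarith
    next
      fix x show "\<bar>g m x - e m\<bar> \<le> 2*\<rho> n + 2*\<rho> m"
        using gb[of m x] eb[of m] rpos[of n] by linarith
    qed (use P that in auto)
    then show ?thesis by (simp add: EY0)
  qed
  have diag: "(\<integral>t. Y n t * Y n t \<partial>M) \<le> 4 * (\<rho> n)\<^sup>2" for n
  proof -
    have "(\<integral>t. Y n t * Y n t \<partial>M) \<le> (\<integral>t. 4 * (\<rho> n)\<^sup>2 \<partial>M)"
    proof (rule integral_mono[OF intYY])
      fix t
      have "\<bar>Y n t\<bar> * \<bar>Y n t\<bar> \<le> (2 * \<rho> n) * (2 * \<rho> n)"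
        using Yb[of n t] by (intro mult_mono) auto
      then show "Y n t * Y n t \<le> 4 * (\<rho> n)\<^sup>2" by (simp add: power2_eq_square abs_mult[symmetric])
    qed simp
    then show ?thesis by (simp add: M.prob_space)
  qed
  define f where "f t = (\<Sum>n<N. g n (t n))" for t
  have fm[measurable]: "f \<in> borel_measurable M" unfolding f_def M_def by measurable
  have Ef: "M.expectation f = (\<Sum>n<N. e n)"
    unfolding f_def using intg by (simp add: Bochner_Integration.integral_sum Eg)
  have fY: "f t - (\<Sum>n<N. e n) = (\<Sum>n<N. Y n t)" for t
    unfolding f_def Y_def by (simp add: sum_subtractf)
  have "M.variance f = (\<integral>t. (\<Sum>n<N. \<Sum>m<N. Y n t * Y m t) \<partial>M)"
    unfolding Ef fY by (simp add: power2_eq_square sum_product)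
  also have "\<dots> = (\<Sum>n<N. \<Sum>m<N. (\<integral>t. Y n t * Y m t \<partial>M))"
    by (simp add: integral_sum intYY)
  also have "\<dots> = (\<Sum>n<N. (\<integral>t. Y n t * Y n t \<partial>M))"
  proof (rule sum.cong[OF refl])
    fix n assume "n \<in> {..<N}"
    then have "(\<Sum>m<N. (\<integral>t. Y n t * Y m t \<partial>M)) = (\<Sum>m\<in>{n}. (\<integral>t. Y n t * Y m t \<partial>M))"
      by (intro sum.mono_neutral_right) (auto simp: offd)
    then show "(\<Sum>m<N. (\<integral>t. Y n t * Y m t \<partial>M)) = (\<integral>t. Y n t * Y n t \<partial>M)" by simp
  qed
  also have "\<dots> \<le> (\<Sum>n<N. 4 * (\<rho> n)\<^sup>2)" by (rule sum_mono) (rule diag)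
  finally have V: "M.variance f \<le> 4 * (\<Sum>n<N. (\<rho> n)\<^sup>2)" by (simp add: sum_distrib_left)
  have fsq: "integrable M (\<lambda>x. (f x)\<^sup>2)"
  proof (rule bint[where B="(\<Sum>n<N. \<rho> n)^2"])
    show "(\<lambda>x. (f x)\<^sup>2) \<in> borel_measurable M" by measurable
    fix x
    have "\<bar>f x\<bar> \<le> (\<Sum>n<N. \<rho> n)"
      unfolding f_def by (rule order_trans[OF sum_abs]) (intro sum_mono gb)
    then have "\<bar>f x\<bar>^2 \<le> (\<Sum>n<N. \<rho> n)^2" by (intro power_mono) auto
    then show "\<bar>(f x)\<^sup>2\<bar> \<le> (\<Sum>n<N. \<rho> n)^2" by simp
  qed (rule M.prob_space_axioms)
  have "M.prob {x\<in>space M. a \<le> \<bar>f x - M.expectation f\<bar>} \<le> M.variance f / a\<^sup>2"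
    by (rule M.Chebyshev_inequality) (use fsq a in auto)
  also have "\<dots> \<le> 4 * (\<Sum>n<N. (\<rho> n)\<^sup>2) / a\<^sup>2"
    using V a by (simp add: divide_right_mono)
  finally have "M.prob {x\<in>space M. a \<le> \<bar>f x - (\<Sum>n<N. e n)\<bar>} \<le> 4 * (\<Sum>n<N. (\<rho> n)\<^sup>2) / a\<^sup>2"
    unfolding Ef .
  then show ?thesis unfolding M_def f_def e_def by simp
qed

lemma separation:
  fixes \<mu>1 \<mu>2 :: "nat \<Rightarrow> 'a measure" and g :: "nat \<Rightarrow> 'a \<Rightarrow> real"
  assumes P1: "\<And>n. prob_space (\<mu>1 n)" and P2: "\<And>n. prob_space (\<mu>2 n)"
    and S: "\<And>n. sets (\<mu>1 n) = sets (\<mu>2 n)"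
    and gm: "\<And>n. g n \<in> borel_measurable (\<mu>1 n)"
    and gb: "\<And>n x. \<bar>g n x\<bar> \<le> \<rho> n" and \<kappa>: "\<kappa> > 0"
    and sep: "\<And>n. \<kappa> * (\<rho> n)\<^sup>2 \<le> integral\<^sup>L (\<mu>2 n) (g n) - integral\<^sup>L (\<mu>1 n) (g n)"
    and ns: "\<not> summable (\<lambda>n. (\<rho> n)\<^sup>2)"
  shows "mutually_singular (PiM UNIV \<mu>1) (PiM UNIV \<mu>2)"
proof -
  define M1 where "M1 = PiM UNIV \<mu>1"
  define M2 where "M2 = PiM UNIV \<mu>2"
  interpret M1: prob_space M1 unfolding M1_def by (rule prob_space_PiM) (use P1 in auto)
  interpret M2: prob_space M2 unfolding M2_def by (rule prob_space_PiM) (use P2 in auto)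
  have gm2: "g n \<in> borel_measurable (\<mu>2 n)" for n
    using gm[of n] measurable_cong_sets[OF S[of n] refl] by blast
  have sM: "sets M1 = sets M2" unfolding M1_def M2_def by (rule sets_PiM_cong) (auto simp: S)
  have spM: "space M1 = space M2" using sets_eq_imp_space_eq[OF sM] .
  define R where "R N = (\<Sum>n<N. (\<rho> n)\<^sup>2)" for N
  define E1 where "E1 N = (\<Sum>n<N. integral\<^sup>L (\<mu>1 n) (g n))" for N
  define E2 where "E2 N = (\<Sum>n<N. integral\<^sup>L (\<mu>2 n) (g n))" for N
  define Sm where "Sm N t = (\<Sum>n<N. g n (t n))" for N t
  have DR: "\<kappa> * R N \<le> E2 N - E1 N" for N
    unfolding R_def E1_def E2_def by (simp add: sum_distrib_left sum_subtractf[symmetric] sum_mono sep)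
  have unb: "\<exists>N. B \<le> R N" for B
  proof (rule ccontr)
    assume "\<not> ?thesis"
    then have "\<And>N. R N \<le> B" by (meson linear)
    then have "summable (\<lambda>n. (\<rho> n)\<^sup>2)"
      by (intro summableI_nonneg_bounded[where x=B]) (auto simp: R_def)
    with ns show False by simp
  qed
  have "\<forall>k. \<exists>N. 16 * 2^k / \<kappa>\<^sup>2 \<le> R N" using unb by blast
  then obtain N where N: "\<And>k. 16 * 2^k / \<kappa>\<^sup>2 \<le> R (N k)" by metis
  have Rpos: "R (N k) > 0" for k
    using N[of k] \<kappa> by (smt (verit) divide_pos_pos zero_less_power)
  have bound: "4 * R (N k) / ((E2 (N k) - E1 (N k)) / 2)\<^sup>2 \<le> (1/2)^k" for k
  proof -
    let ?R = "R (N k)" and ?D = "E2 (N k) - E1 (N k)"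
    have D: "\<kappa> * ?R \<le> ?D" by (rule DR)
    have kR: "\<kappa> * ?R > 0" using \<kappa> Rpos by simp
    have "4 * ?R / (?D / 2)\<^sup>2 = 16 * ?R / ?D\<^sup>2" by (simp add: power2_eq_square)
    also have "\<dots> \<le> 16 * ?R / (\<kappa> * ?R)\<^sup>2"
    proof -
      have "(\<kappa> * ?R)\<^sup>2 \<le> ?D\<^sup>2" using D kR by (intro power_mono) auto
      moreover have "0 < (\<kappa> * ?R)\<^sup>2" using kR by (intro zero_less_power) 
      moreover have "0 \<le> 16 * ?R" using Rpos[of k] by simp
      ultimately show ?thesis by (intro frac_le) auto
    qed
    also have "\<dots> = 16 / (\<kappa>\<^sup>2 * ?R)" using Rpos[of k] \<kappa> by (simp add: power2_eq_square)
    also have "\<dots> \<le> (1/2)^k"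
    proof -
      have k2: "0 < (\<kappa>\<^sup>2::real)" using \<kappa> by simp
      have "16 * 2^k \<le> ?R * \<kappa>\<^sup>2" using N[of k] k2 by (simp add: pos_divide_le_eq)
      then have "16 * 2^k \<le> \<kappa>\<^sup>2 * ?R" by (simp add: mult.commute)
      then have "16 / (\<kappa>\<^sup>2 * ?R) \<le> 16 / (16 * 2^k)"
        using Rpos[of k] k2 by (intro divide_left_mono) auto
      also have "\<dots> = (1/2)^k" by (simp add: power_one_over)
      finally show ?thesis .
    qed
    finally show ?thesis .
  qed
  define A where "A k = {t \<in> space M1. (E1 (N k) + E2 (N k)) / 2 \<le> Sm (N k) t}" for k
  have Sm_m1[measurable]: "Sm K \<in> borel_measurable M1" for K
    unfolding Sm_def M1_def using gm by measurable
  have Sm_m2[measurable]: "Sm K \<in> borel_measurable M2" for K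
    unfolding Sm_def M2_def using gm2 by measurable
  have A1: "A k \<in> sets M1" for k unfolding A_def by measurable
  have A2: "A k \<in> sets M2" for k using A1 sM by simp
  have Ac2: "space M2 - A k \<in> sets M2" for k using A2 by auto
  have m1: "measure M1 (A k) \<le> (1/2)^k" for k
  proof -
    let ?D = "E2 (N k) - E1 (N k)"
    have "\<kappa> * R (N k) > 0" using \<kappa> Rpos[of k] by simp
    then have Dpos: "?D / 2 > 0" using DR[of "N k"] by (smt (verit) half_gt_zero)
    have "A k \<subseteq> {t \<in> space M1. ?D / 2 \<le> \<bar>Sm (N k) t - E1 (N k)\<bar>}"
      unfolding A_def by (auto simp: abs_if)
    then have "measure M1 (A k) \<le> measure M1 {t \<in> space M1. ?D / 2 \<le> \<bar>Sm (N k) t - E1 (N k)\<bar>}"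
      by (intro M1.finite_measure_mono) measurable
    also have "\<dots> \<le> 4 * R (N k) / (?D / 2)\<^sup>2"
      using sum_dev[OF P1 gm gb Dpos, where N="N k"] unfolding M1_def Sm_def E1_def R_def .
    finally show ?thesis using bound[of k] by linarith
  qed
  have m2: "measure M2 (space M2 - A k) \<le> (1/2)^k" for k
  proof -
    let ?D = "E2 (N k) - E1 (N k)"
    have "\<kappa> * R (N k) > 0" using \<kappa> Rpos[of k] by simp
    then have Dpos: "?D / 2 > 0" using DR[of "N k"] by (smt (verit) half_gt_zero)
    have "space M2 - A k \<subseteq> {t \<in> space M2. ?D / 2 \<le> \<bar>Sm (N k) t - E2 (N k)\<bar>}"
      unfolding A_def using spM by (auto simp: abs_if)
    then have "measure M2 (space M2 - A k) \<le> measure M2 {t \<in> space M2. ?D / 2 \<le> \<bar>Sm (N k) t - E2 (N k)\<bar>}"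
      by (intro M2.finite_measure_mono) measurable
    also have "\<dots> \<le> 4 * R (N k) / (?D / 2)\<^sup>2"
      using sum_dev[OF P2 gm2 gb Dpos, where N="N k"] unfolding M2_def Sm_def E2_def R_def .
    finally show ?thesis using bound[of k] by linarith
  qed
  have geo: "summable (\<lambda>k. (1/2::real)^k)" by (rule summable_geometric) simp
  have n1: "limsup A \<in> null_sets M1"
    by (rule borel_cantelli_limsup1)
       (auto simp: A1 M1.emeasure_finite less_top[symmetric] intro!: summable_comparison_test[OF _ geo] exI[of _ 0] m1)
  have n2: "limsup (\<lambda>k. space M2 - A k) \<in> null_sets M2"
    by (rule borel_cantelli_limsup1)
       (auto simp: Ac2 M2.emeasure_finite less_top[symmetric] intro!: summable_comparison_test[OF _ geo] exI[of _ 0] m2)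
  have sub: "space M2 - limsup A \<subseteq> limsup (\<lambda>k. space M2 - A k)"
  proof
    fix x assume x: "x \<in> space M2 - limsup A"
    then obtain n where n: "\<And>k. k \<ge> n \<Longrightarrow> x \<notin> A k" by (auto simp: limsup_INF_SUP)
    show "x \<in> limsup (\<lambda>k. space M2 - A k)"
      unfolding limsup_INF_SUP
    proof (intro INT_I UN_I)
      fix m show "max m n \<in> {m..}" by simp
      show "x \<in> space M2 - A (max m n)" using x n[of "max m n"] by auto
    qed
  qed
  have "emeasure M2 (space M2 - limsup A) = 0"
  proof -
    have "limsup A \<in> sets M2" using n1 sM by (auto dest: null_setsD2)
    then have "space M2 - limsup A \<in> sets M2" by auto
    from null_sets_subset[OF n2 this sub] show ?thesis by auto
  qed
  moreover have "limsup A \<in> sets M1" "emeasure M1 (limsup A) = 0" using n1 by auto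
  ultimately show ?thesis unfolding mutually_singular_def M1_def M2_def by blast
qed

definition UU :: "(nat \<Rightarrow> 'a::field) \<Rightarrow> nat \<Rightarrow> 'a" where
  "UU u n = (\<Prod>i\<in>{1..n}. u i)"

lemma UU_Suc: "UU u (Suc n) = UU u n * u (Suc n)"
  unfolding UU_def by (simp add: prod.nat_ivl_Suc' mult.commute)

lemma UU_nz: "(\<forall>n\<ge>1. u n \<noteq> 0) \<Longrightarrow> UU u n \<noteq> 0"
  unfolding UU_def by (auto simp: prod_zero_iff)

lemma lam_UU: "lam u v n = UU u n / UU v n"
  unfolding lam_def UU_def ..

lemma space_PiM_UNIV:
  assumes "\<And>n. sets (M n) = sets (borel :: 'b::topological_space measure)"
  shows "space (PiM UNIV M) = UNIV"
proof -
  have "space (M n) = UNIV" for n using sets_eq_imp_space_eq[OF assms[of n]] by simp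
  then show ?thesis by (simp add: space_PiM)
qed

lemma marginal_step:
  fixes u :: "nat \<Rightarrow> 'a::{real_normed_field, second_countable_topology}"
  assumes P: "\<And>n. prob_space (\<mu> n)" and S: "\<And>n. sets (\<mu> n) = sets borel"
    and inv: "shift_invariant u (PiM UNIV \<mu>)"
  shows "\<mu> j = distr (\<mu> (Suc j)) borel (\<lambda>x. u (Suc j) * x)"
proof (rule measure_eqI)
  show "sets (\<mu> j) = sets (distr (\<mu> (Suc j)) borel (\<lambda>x. u (Suc j) * x))" using S by simp
  interpret PP: product_prob_space \<mu> UNIV
    unfolding product_prob_space_def product_prob_space_axioms_def product_sigma_finite_def
    using P prob_space_imp_sigma_finite by blast
  have sp: "space (PiM UNIV \<mu>) = UNIV" by (rule space_PiM_UNIV[OF S])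
  have spn: "space (\<mu> n) = UNIV" for n using sets_eq_imp_space_eq[OF S[of n]] by simp
  fix A assume "A \<in> sets (\<mu> j)"
  then have A: "A \<in> sets borel" using S by simp
  have mult_m: "(\<lambda>x. u (Suc j) * x) \<in> borel_measurable borel" by measurable
  have mm: "(\<lambda>x. u (Suc j) * x) \<in> borel_measurable (\<mu> (Suc j))"
    by (subst measurable_cong_sets[OF S refl]) (rule mult_m)
  have A': "(\<lambda>x. u (Suc j) * x) -` A \<in> sets (\<mu> (Suc j))"
    using measurable_sets[OF mult_m A] S by simp
  define B where "B = {t :: nat \<Rightarrow> 'a. t j \<in> A}"
  have "B = (\<lambda>t. t j) -` A \<inter> space borel" unfolding B_def by auto
  then have B: "B \<in> sets borel"
    using measurable_sets[OF measurable_product_coordinates A] by simp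
  have 1: "emeasure (PiM UNIV \<mu>) B = emeasure (\<mu> j) A"
  proof -
    have "B = {x \<in> space (PiM UNIV \<mu>). x j \<in> A}" unfolding B_def sp by simp
    then show ?thesis using PP.emeasure_PiM_Collect_single[of j A] A S by simp
  qed
  have 2: "emeasure (PiM UNIV \<mu>) (wshift u -` B) = emeasure (\<mu> (Suc j)) ((\<lambda>x. u (Suc j) * x) -` A)"
  proof -
    have "wshift u -` B = {x \<in> space (PiM UNIV \<mu>). x (Suc j) \<in> (\<lambda>x. u (Suc j) * x) -` A}"
      unfolding B_def sp wshift_def by auto
    then show ?thesis using PP.emeasure_PiM_Collect_single[of "Suc j", OF _ A'] by simp
  qed
  have 3: "emeasure (PiM UNIV \<mu>) (wshift u -` B) = emeasure (PiM UNIV \<mu>) B"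
    using inv B unfolding shift_invariant_def by blast
  have "emeasure (\<mu> j) A = emeasure (\<mu> (Suc j)) ((\<lambda>x. u (Suc j) * x) -` A)"
    using 1 2 3 by simp
  also have "\<dots> = emeasure (\<mu> (Suc j)) ((\<lambda>x. u (Suc j) * x) -` A \<inter> space (\<mu> (Suc j)))"
    by (simp add: spn)
  also have "\<dots> = emeasure (distr (\<mu> (Suc j)) borel (\<lambda>x. u (Suc j) * x)) A"
    by (rule emeasure_distr[symmetric]) (use A mm in auto)
  finally show "emeasure (\<mu> j) A = emeasure (distr (\<mu> (Suc j)) borel (\<lambda>x. u (Suc j) * x)) A" .
qed

lemma marginal_all:
  fixes u :: "nat \<Rightarrow> 'a::{real_normed_field, second_countable_topology}"
  assumes P: "\<And>n. prob_space (\<mu> n)" and S: "\<And>n. sets (\<mu> n) = sets borel"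
    and inv: "shift_invariant u (PiM UNIV \<mu>)" and nz: "\<forall>n\<ge>1. u n \<noteq> 0"
  shows "\<mu> n = distr (\<mu> 0) borel (\<lambda>x. x / UU u n)"
proof (induction n)
  case 0
  have "distr (\<mu> 0) borel (\<lambda>x. x / UU u 0) = distr (\<mu> 0) borel (\<lambda>x. x)"
    by (simp add: UU_def)
  also have "\<dots> = \<mu> 0"
    using S[of 0] by (subst distr_id2) auto
  finally show ?case by simp
next
  case (Suc n)
  have us: "u (Suc n) \<noteq> 0" using nz by simp
  have "distr (\<mu> n) borel (\<lambda>x. x / u (Suc n))
      = distr (distr (\<mu> (Suc n)) borel (\<lambda>x. u (Suc n) * x)) borel (\<lambda>x. x / u (Suc n))"
    using marginal_step[OF P S inv, of n] by simp
  also have "\<dots> = distr (\<mu> (Suc n)) borel ((\<lambda>x. x / u (Suc n)) \<circ> (\<lambda>x. u (Suc n) * x))"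
    by (rule distr_distr) (auto simp: measurable_cong_sets[OF S refl])
  also have "((\<lambda>x. x / u (Suc n)) \<circ> (\<lambda>x. u (Suc n) * x)) = (\<lambda>x. x)"
    using us by (auto simp: fun_eq_iff)
  also have "distr (\<mu> (Suc n)) borel (\<lambda>x. x) = \<mu> (Suc n)"
    using S[of "Suc n"] by (subst distr_id2) auto
  finally have 1: "\<mu> (Suc n) = distr (\<mu> n) borel (\<lambda>x. x / u (Suc n))" by simp
  also have "\<dots> = distr (distr (\<mu> 0) borel (\<lambda>x. x / UU u n)) borel (\<lambda>x. x / u (Suc n))"
    using Suc by simp
  also have "\<dots> = distr (\<mu> 0) borel ((\<lambda>x. x / u (Suc n)) \<circ> (\<lambda>x. x / UU u n))"
    by (rule distr_distr) (auto simp: measurable_cong_sets[OF S refl])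
  also have "\<dots> = distr (\<mu> 0) borel (\<lambda>x. x / UU u (Suc n))"
  proof -
    have "((\<lambda>x. x / u (Suc n)) \<circ> (\<lambda>x. x / UU u n)) = (\<lambda>x. x / UU u (Suc n))"
      by (auto simp: fun_eq_iff UU_Suc)
    then show ?thesis by simp
  qed
  finally show ?case by (simp only:)
qed

lemma law_gen:
  fixes u :: "nat \<Rightarrow> 'a::{real_normed_field, second_countable_topology}"
  assumes P: "\<And>n. prob_space (\<mu> n)" and S: "\<And>n. sets (\<mu> n) = sets borel"
    and inv: "shift_invariant u (PiM UNIV \<mu>)" and nz: "\<forall>n\<ge>1. u n \<noteq> 0"
    and z0: "emeasure (\<mu> 0) {0} = 0" and K: "K \<noteq> 0"
  shows "distr (\<mu> n) borel (\<lambda>t. ln (norm (K * t))) =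
         distr (distr (\<mu> 0) borel (\<lambda>x. ln (norm x))) borel (\<lambda>z. z + ln (norm (K / UU u n)))"
proof -
  have U: "UU u n \<noteq> 0" using UU_nz[OF nz] .
  have pw: "ln (norm (K * (x / UU u n))) = ln (norm x) + ln (norm (K / UU u n))" if x: "x \<noteq> 0" for x
  proof -
    have "K * (x / UU u n) = (K / UU u n) * x" by (simp add: field_simps)
    then have "ln (norm (K * (x / UU u n))) = ln (norm (K / UU u n) * norm x)"
      by (metis norm_mult)
    also have "\<dots> = ln (norm (K / UU u n)) + ln (norm x)"
      using x K U by (subst ln_mult) auto
    finally show ?thesis by simp
  qed
  have m0: "f \<in> borel_measurable (\<mu> 0)" if "f \<in> borel_measurable borel" for f :: "'a \<Rightarrow> 'b::topological_space"
    by (subst measurable_cong_sets[OF S refl]) (rule that)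
  have "distr (\<mu> n) borel (\<lambda>t. ln (norm (K * t))) =
        distr (distr (\<mu> 0) borel (\<lambda>x. x / UU u n)) borel (\<lambda>t. ln (norm (K * t)))"
    using marginal_all[OF P S inv nz, of n] by simp
  also have "\<dots> = distr (\<mu> 0) borel ((\<lambda>t. ln (norm (K * t))) \<circ> (\<lambda>x. x / UU u n))"
    by (rule distr_distr) (auto intro!: m0)
  also have "\<dots> = distr (\<mu> 0) borel ((\<lambda>z. z + ln (norm (K / UU u n))) \<circ> (\<lambda>x. ln (norm x)))"
  proof (rule distr_cong_AE)
    have N: "{0} \<in> null_sets (\<mu> 0)" using z0 S[of 0] by (auto simp: null_sets_def)
    show "AE x in \<mu> 0. ((\<lambda>t. ln (norm (K * t))) \<circ> (\<lambda>x. x / UU u n)) x =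
        ((\<lambda>z. z + ln (norm (K / UU u n))) \<circ> (\<lambda>x. ln (norm x))) x"
    proof (rule AE_I'[OF N])
      show "{x \<in> space (\<mu> 0). \<not> (((\<lambda>t. ln (norm (K * t))) \<circ> (\<lambda>x. x / UU u n)) x =
        ((\<lambda>z. z + ln (norm (K / UU u n))) \<circ> (\<lambda>x. ln (norm x))) x)} \<subseteq> {0}"
        using pw by auto
    qed
  qed (auto intro!: m0)
  also have "\<dots> = distr (distr (\<mu> 0) borel (\<lambda>x. ln (norm x))) borel (\<lambda>z. z + ln (norm (K / UU u n)))"
    by (rule distr_distr[symmetric]) (auto intro!: m0)
  finally show ?thesis .
qed

lemma log_sep:
  fixes u v :: "nat \<Rightarrow> 'a::{real_normed_field, second_countable_topology}"
    and h :: "real \<Rightarrow> real" and r :: "nat \<Rightarrow> real"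
  assumes Pu: "\<And>n. prob_space (\<mu>u n)" and Su: "\<And>n. sets (\<mu>u n) = sets borel"
    and invu: "shift_invariant u (PiM UNIV \<mu>u)" and nzu: "\<forall>n\<ge>1. u n \<noteq> 0"
    and zu: "emeasure (\<mu>u 0) {0} = 0"
    and Pv: "\<And>n. prob_space (\<mu>v n)" and Sv: "\<And>n. sets (\<mu>v n) = sets borel"
    and invv: "shift_invariant v (PiM UNIV \<mu>v)" and nzv: "\<forall>n\<ge>1. v n \<noteq> 0"
    and zv: "emeasure (\<mu>v 0) {0} = 0"
    and hm[measurable]: "h \<in> borel_measurable borel" and hb: "\<And>z. \<bar>h z\<bar> \<le> C"
    and \<kappa>: "\<kappa> > 0"
    and sep: "\<And>n. \<kappa> * (r n)\<^sup>2 \<le> r n * ((\<integral>z. h (z + ln (norm (lam u v n))) \<partial>distr (\<mu>v 0) borel (\<lambda>x. ln (norm x)))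
                                    - (\<integral>z. h z \<partial>distr (\<mu>u 0) borel (\<lambda>x. ln (norm x))))"
    and ns: "\<not> summable (\<lambda>n. (r n)\<^sup>2)"
  shows "mutually_singular (PiM UNIV \<mu>u) (PiM UNIV \<mu>v)"
proof -
  define C' where "C' = C + 1"
  have C0: "C \<ge> 0" using hb[of 0] by linarith
  have C': "C' > 0" unfolding C'_def using C0 by simp
  define P where "P = distr (\<mu>u 0) borel (\<lambda>x. ln (norm x))"
  define Q where "Q = distr (\<mu>v 0) borel (\<lambda>x. ln (norm x))"
  define F where "F n t = ln (norm (UU u n * t))" for n and t :: 'a
  define g where "g n t = r n * h (F n t)" for n t
  have Fm[measurable]: "F n \<in> borel_measurable borel" for n unfolding F_def by measurable
  have mu: "f \<in> borel_measurable (\<mu>u n)" if "f \<in> borel_measurable borel" for f :: "'a \<Rightarrow> real" and n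
    by (subst measurable_cong_sets[OF Su refl]) (rule that)
  have mv: "f \<in> borel_measurable (\<mu>v n)" if "f \<in> borel_measurable borel" for f :: "'a \<Rightarrow> real" and n
    by (subst measurable_cong_sets[OF Sv refl]) (rule that)
  have gm: "g n \<in> borel_measurable (\<mu>u n)" for n unfolding g_def by (rule mu) measurable
  have Un: "UU u n \<noteq> 0" for n by (rule UU_nz[OF nzu])
  have lawu: "distr (\<mu>u n) borel (F n) = P" for n
  proof -
    have "distr (\<mu>u n) borel (F n) = distr P borel (\<lambda>z. z + ln (norm (UU u n / UU u n)))"
      unfolding F_def P_def by (rule law_gen[OF Pu Su invu nzu zu Un])
    also have "\<dots> = distr P borel (\<lambda>z. z)" using Un by simp
    also have "\<dots> = P" unfolding P_def by (rule distr_id2) simp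
    finally show ?thesis .
  qed
  have lawv: "distr (\<mu>v n) borel (F n) = distr Q borel (\<lambda>z. z + ln (norm (lam u v n)))" for n
    unfolding F_def Q_def lam_UU by (rule law_gen[OF Pv Sv invv nzv zv Un])
  have Iu: "integral\<^sup>L (\<mu>u n) (g n) = r n * (\<integral>z. h z \<partial>P)" for n
  proof -
    have "(\<integral>z. h z \<partial>P) = (\<integral>z. h z \<partial>distr (\<mu>u n) borel (F n))" by (simp add: lawu)
    also have "\<dots> = (\<integral>t. h (F n t) \<partial>\<mu>u n)" by (rule integral_distr) (auto intro: mu)
    finally show ?thesis unfolding g_def by simp
  qed
  have Iv: "integral\<^sup>L (\<mu>v n) (g n) = r n * (\<integral>z. h (z + ln (norm (lam u v n))) \<partial>Q)" for n
  proof -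
    have "(\<integral>z. h (z + ln (norm (lam u v n))) \<partial>Q) = (\<integral>z. h z \<partial>distr Q borel (\<lambda>z. z + ln (norm (lam u v n))))"
      by (rule integral_distr[symmetric]) (auto simp: Q_def)
    also have "\<dots> = (\<integral>z. h z \<partial>distr (\<mu>v n) borel (F n))" by (simp add: lawv)
    also have "\<dots> = (\<integral>t. h (F n t) \<partial>\<mu>v n)" by (rule integral_distr) (auto intro: mv)
    finally show ?thesis unfolding g_def by simp
  qed
  show ?thesis
  proof (rule separation[OF Pu Pv _ gm, where \<rho>="\<lambda>n. C' * \<bar>r n\<bar>" and \<kappa>="\<kappa> / C'^2"])
    show "sets (\<mu>u n) = sets (\<mu>v n)" for n using Su Sv by simp
    show "\<bar>g n x\<bar> \<le> C' * \<bar>r n\<bar>" for n x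
    proof -
      have "\<bar>g n x\<bar> = \<bar>r n\<bar> * \<bar>h (F n x)\<bar>" unfolding g_def by (simp add: abs_mult)
      also have "\<dots> \<le> \<bar>r n\<bar> * C'" using hb[of "F n x"] unfolding C'_def by (intro mult_left_mono) auto
      finally show ?thesis by (simp add: mult.commute)
    qed
    show "\<kappa> / C'^2 > 0" using \<kappa> C' by simp
    show "\<kappa> / C'^2 * (C' * \<bar>r n\<bar>)\<^sup>2 \<le> integral\<^sup>L (\<mu>v n) (g n) - integral\<^sup>L (\<mu>u n) (g n)" for n
    proof -
      have "\<kappa> / C'^2 * (C' * \<bar>r n\<bar>)\<^sup>2 = \<kappa> * (r n)\<^sup>2"
        using C' by (simp add: power_mult_distrib)
      also have "\<dots> \<le> r n * ((\<integral>z. h (z + ln (norm (lam u v n))) \<partial>Q) - (\<integral>z. h z \<partial>P))"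
        using sep[of n] unfolding P_def Q_def .
      also have "\<dots> = integral\<^sup>L (\<mu>v n) (g n) - integral\<^sup>L (\<mu>u n) (g n)"
        by (simp add: Iu Iv right_diff_distrib)
      finally show ?thesis .
    qed
    show "\<not> summable (\<lambda>n. (C' * \<bar>r n\<bar>)\<^sup>2)"
    proof
      assume "summable (\<lambda>n. (C' * \<bar>r n\<bar>)\<^sup>2)"
      then have "summable (\<lambda>n. (C' * \<bar>r n\<bar>)\<^sup>2 / C'^2)" by (rule summable_divide)
      moreover have "(\<lambda>n. (C' * \<bar>r n\<bar>)\<^sup>2 / C'^2) = (\<lambda>n. (r n)\<^sup>2)"
        using C' by (simp add: power_mult_distrib)
      ultimately show False using ns by simp
    qed
  qed
qed

definition clip :: "real \<Rightarrow> real" where "clip s = max (-1) (min s 1)"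

definition wt :: "real \<Rightarrow> real" where "wt t = 1 / (1 + (\<bar>t\<bar> + 1)\<^sup>2)"

lemma wt_pos: "wt t > 0" unfolding wt_def by (simp add: add_pos_nonneg)

lemma wt_le1: "wt t \<le> 1" unfolding wt_def by (simp add: add_pos_nonneg divide_le_eq)

lemma mvt_arctan:
  fixes a b z :: real
  assumes ab: "a \<le> b" "b - a \<le> 1" and z: "z = a \<or> z = b"
  shows "(b - a) * wt z \<le> arctan b - arctan a"
proof (cases "a = b")
  case True then show ?thesis by simp
next
  case False
  with ab have "a < b" by simp
  from MVT2[OF this, of arctan "\<lambda>x. inverse (1 + x\<^sup>2)"] DERIV_arctan
  obtain \<xi> where \<xi>: "a < \<xi>" "\<xi> < b" "arctan b - arctan a = (b - a) * inverse (1 + \<xi>\<^sup>2)" by blast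
  have "\<bar>\<xi>\<bar> \<le> \<bar>z\<bar> + 1" using \<xi> ab z by auto
  then have "\<xi>\<^sup>2 \<le> (\<bar>z\<bar> + 1)\<^sup>2"
    by (metis abs_ge_zero abs_le_square_iff abs_of_nonneg add_nonneg_nonneg zero_le_one)
  then have "wt z \<le> inverse (1 + \<xi>\<^sup>2)"
    unfolding wt_def by (simp add: inverse_eq_divide frac_le add_pos_nonneg)
  then have "(b - a) * wt z \<le> (b - a) * inverse (1 + \<xi>\<^sup>2)"
    using ab by (intro mult_left_mono) auto
  then show ?thesis using \<xi> by simp
qed

lemma arctan_pw: "(clip s)\<^sup>2 * wt z \<le> clip s * (arctan (z + s) - arctan z)"
proof -
  have w0: "wt z > 0" by (rule wt_pos)
  consider "1 \<le> s" | "0 \<le> s" "s \<le> 1" | "-1 \<le> s" "s \<le> 0" | "s \<le> -1" by linarith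
  then show ?thesis
  proof cases
    case 1
    then have c: "clip s = 1" by (simp add: clip_def)
    have "(1::real) * wt z \<le> arctan (z + 1) - arctan z" using mvt_arctan[of z "z+1" z] by simp
    moreover have "arctan (z + 1) \<le> arctan (z + s)" using 1 by (simp add: arctan_le_iff)
    ultimately show ?thesis by (simp add: c)
  next
    case 2
    then have c: "clip s = s" by (simp add: clip_def)
    have "s * wt z \<le> arctan (z + s) - arctan z" using mvt_arctan[of z "z+s" z] 2 by simp
    then have "s * (s * wt z) \<le> s * (arctan (z + s) - arctan z)" using 2 by (intro mult_left_mono) auto
    then show ?thesis by (simp add: c power2_eq_square mult.assoc)
  next
    case 3
    then have c: "clip s = s" by (simp add: clip_def)
    have "(-s) * wt z \<le> arctan z - arctan (z + s)" using mvt_arctan[of "z+s" z z] 3 by simp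
    then have "(-s) * ((-s) * wt z) \<le> (-s) * (arctan z - arctan (z + s))" using 3 by (intro mult_left_mono) auto
    then show ?thesis by (simp add: c power2_eq_square algebra_simps)
  next
    case 4
    then have c: "clip s = -1" by (simp add: clip_def)
    have "(1::real) * wt z \<le> arctan z - arctan (z - 1)" using mvt_arctan[of "z - 1" z z] by simp
    moreover have "arctan (z + s) \<le> arctan (z - 1)" using 4 by (simp add: arctan_le_iff)
    ultimately show ?thesis by (simp add: c)
  qed
qed

lemma integral_pos:
  fixes f :: "'a \<Rightarrow> real"
  assumes P: "prob_space M" and fm: "f \<in> borel_measurable M" and fb: "\<And>x. \<bar>f x\<bar> \<le> B"
    and fp: "\<And>x. f x > 0"
  shows "integral\<^sup>L M f > 0"
proof -
  interpret prob_space M by (rule P)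
  have int: "integrable M f" by (rule integrable_const_bound[where B=B]) (use fm fb in auto)
  have ge: "integral\<^sup>L M f \<ge> 0" by (rule integral_nonneg_AE) (use fp less_imp_le in auto)
  have "integral\<^sup>L M f \<noteq> 0"
  proof
    assume "integral\<^sup>L M f = 0"
    then have "AE x in M. f x = 0" using integral_nonneg_eq_0_iff_AE[OF int] fp less_imp_le by auto
    then have "AE x in M. False" using fp by (auto elim: AE_mp simp: less_le)
    then show False by (simp add: AE_False)
  qed
  with ge show ?thesis by simp
qed

lemma arctan_core:
  assumes P: "prob_space P" and S: "sets P = sets (borel :: real measure)"
  shows "\<exists>\<kappa>>0. \<forall>s. \<kappa> * (clip s)\<^sup>2 \<le> clip s * ((\<integral>z. arctan (z + s) \<partial>P) - (\<integral>z. arctan z \<partial>P))"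
proof -
  interpret prob_space P by (rule P)
  have mP: "f \<in> borel_measurable P" if "f \<in> borel_measurable borel" for f :: "real \<Rightarrow> real"
    by (subst measurable_cong_sets[OF S refl]) (rule that)
  have intb: "integrable P f" if "f \<in> borel_measurable borel" "\<And>x. \<bar>f x\<bar> \<le> B" for f :: "real \<Rightarrow> real" and B :: real
  proof (rule integrable_const_bound[where B=B])
    show "AE x in P. norm (f x) \<le> B" using that(2) by simp
    show "f \<in> borel_measurable P" by (rule mP[OF that(1)])
  qed
  have at_b: "\<bar>arctan x\<bar> \<le> pi/2" for x using arctan_bounded[of x] by auto
  have wtm: "wt \<in> borel_measurable borel" unfolding wt_def by measurable
  define \<kappa> where "\<kappa> = (\<integral>z. wt z \<partial>P)"
  have wtb: "\<bar>wt x\<bar> \<le> 1" for x using wt_pos[of x] wt_le1[of x] by simp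
  have \<kappa>: "\<kappa> > 0" unfolding \<kappa>_def
    by (rule integral_pos[OF P mP[OF wtm] wtb wt_pos])
  have iw: "integrable P wt" by (rule intb[OF wtm wtb])
  have "\<kappa> * (clip s)\<^sup>2 \<le> clip s * ((\<integral>z. arctan (z + s) \<partial>P) - (\<integral>z. arctan z \<partial>P))" for s
  proof -
    have i1: "integrable P (\<lambda>z. arctan (z + s))" by (rule intb[of _ "pi/2"]) (simp, rule at_b)
    have i2: "integrable P (\<lambda>z. arctan z)" by (rule intb[of _ "pi/2"]) (simp, rule at_b)
    have i3: "integrable P (\<lambda>z. (clip s)\<^sup>2 * wt z)" using iw by simp
    have i4: "integrable P (\<lambda>z. clip s * (arctan (z + s) - arctan z))" using i1 i2 by simp
    have "\<kappa> * (clip s)\<^sup>2 = (\<integral>z. (clip s)\<^sup>2 * wt z \<partial>P)" unfolding \<kappa>_def by (simp add: mult.commute)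
    also have "\<dots> \<le> (\<integral>z. clip s * (arctan (z + s) - arctan z) \<partial>P)"
      by (rule integral_mono[OF i3 i4 arctan_pw])
    also have "\<dots> = clip s * ((\<integral>z. arctan (z + s) \<partial>P) - (\<integral>z. arctan z \<partial>P))"
      using i1 i2 by simp
    finally show ?thesis .
  qed
  with \<kappa> show ?thesis by blast
qed

lemma exp_bound3:
  fixes s :: real assumes "\<bar>s\<bar> \<le> 1"
  shows "(1 - exp s)\<^sup>2 \<le> 9 * s\<^sup>2"
proof -
  have e3: "exp s \<le> 3"
  proof -
    have "exp s \<le> exp 1" using assms by simp
    also have "exp (1::real) \<le> 3" using exp_le by simp
    finally show ?thesis .
  qed
  have "\<bar>1 - exp s\<bar> \<le> 3 * \<bar>s\<bar>"
  proof (cases "s \<ge> 0")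
    case True
    have "1 - s \<le> exp (-s)" using exp_ge_add_one_self[of "-s"] by simp
    then have "(1 - s) * exp s \<le> exp (-s) * exp s" by (intro mult_right_mono) auto
    then have "(1 - s) * exp s \<le> 1" by (simp add: exp_minus field_simps)
    then have "exp s - 1 \<le> s * exp s" by (simp add: algebra_simps)
    also have "\<dots> \<le> s * 3" using True e3 by (intro mult_left_mono) auto
    finally show ?thesis using True by simp
  next
    case False
    have "1 + s \<le> exp s" by (rule exp_ge_add_one_self)
    moreover have "exp s \<le> 1" using False by simp
    ultimately have a: "1 - exp s \<le> - s" "0 \<le> 1 - exp s" by linarith+
    then have "\<bar>1 - exp s\<bar> \<le> - s" by simp
    then show ?thesis using False by simp
  qed
  then have "\<bar>1 - exp s\<bar>\<^sup>2 \<le> (3 * \<bar>s\<bar>)\<^sup>2" by (intro power_mono) auto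
  then show ?thesis by (simp add: power_mult_distrib)
qed

lemma exp_clip:
  fixes s :: "nat \<Rightarrow> real"
  assumes "summable (\<lambda>n. (clip (s n))\<^sup>2)"
  shows "summable (\<lambda>n. (1 - exp (s n))\<^sup>2)"
proof -
  have "(\<lambda>n. (clip (s n))\<^sup>2) \<longlonglongrightarrow> 0" using summable_LIMSEQ_zero[OF assms] .
  then have "eventually (\<lambda>n. (clip (s n))\<^sup>2 < 1) sequentially"
    by (rule order_tendstoD) simp
  then obtain N where N: "\<And>n. n \<ge> N \<Longrightarrow> (clip (s n))\<^sup>2 < 1" by (auto simp: eventually_sequentially)
  have small: "\<bar>s n\<bar> < 1" if "n \<ge> N" for n
  proof (rule ccontr)
    assume "\<not> \<bar>s n\<bar> < 1"
    then have "clip (s n) = 1 \<or> clip (s n) = -1" by (auto simp: clip_def)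
    then show False using N[OF that] by auto
  qed
  show ?thesis
  proof (rule summable_comparison_test'[where N=N])
    show "summable (\<lambda>n. 9 * (clip (s n))\<^sup>2)" using assms by (rule summable_mult)
    fix n assume n: "N \<le> n"
    then have c: "clip (s n) = s n" using small[OF n] by (auto simp: clip_def)
    show "norm ((1 - exp (s n))\<^sup>2) \<le> 9 * (clip (s n))\<^sup>2"
      using exp_bound3[of "s n"] small[OF n] by (simp add: c)
  qed
qed

definition testable :: "real measure \<Rightarrow> real measure \<Rightarrow> (nat \<Rightarrow> real) \<Rightarrow> bool" where
  "testable P Q ll \<longleftrightarrow> (\<exists>h C r \<kappa>. h \<in> borel_measurable borel \<and> (\<forall>z. \<bar>h z\<bar> \<le> C) \<and> (\<kappa>::real) > 0 \<and>
     (\<forall>n. \<kappa> * (r n)\<^sup>2 \<le> r n * ((\<integral>z. h (z + ll n) \<partial>Q) - (\<integral>z. h z \<partial>P))) \<and>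
     \<not> summable (\<lambda>n. (r n)\<^sup>2))"

lemma inf_test:
  fixes h :: "real \<Rightarrow> real"
  assumes hm: "h \<in> borel_measurable borel" and hb: "\<And>z. \<bar>h z\<bar> \<le> C"
    and Sinf: "infinite S" and \<epsilon>: "\<epsilon> > 0" and \<sigma>: "\<sigma> = 1 \<or> \<sigma> = -1"
    and D: "\<And>n. n \<in> S \<Longrightarrow> \<epsilon> \<le> \<sigma> * ((\<integral>z. h (z + ll n) \<partial>Q) - (\<integral>z. h z \<partial>P))"
  shows "testable P Q ll"
  unfolding testable_def
proof (intro exI conjI allI)
  define r where "r n = (if n \<in> S then \<sigma> else 0)" for n
  show "h \<in> borel_measurable borel" by (rule hm)
  show "\<bar>h z\<bar> \<le> C" for z by (rule hb)
  show "\<epsilon> > 0" by (rule \<epsilon>)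
  show "\<epsilon> * (r n)\<^sup>2 \<le> r n * ((\<integral>z. h (z + ll n) \<partial>Q) - (\<integral>z. h z \<partial>P))" for n
    using D[of n] \<sigma> by (auto simp: r_def)
  show "\<not> summable (\<lambda>n. (r n)\<^sup>2)"
  proof
    assume "summable (\<lambda>n. (r n)\<^sup>2)"
    then have "(\<lambda>n. (r n)\<^sup>2) \<longlonglongrightarrow> 0" by (rule summable_LIMSEQ_zero)
    then have "eventually (\<lambda>n. (r n)\<^sup>2 < 1) sequentially" by (rule order_tendstoD) simp
    then obtain N where N: "\<And>n. n \<ge> N \<Longrightarrow> (r n)\<^sup>2 < 1" by (auto simp: eventually_sequentially)
    have "S \<subseteq> {..<N}"
    proof
      fix n assume "n \<in> S"
      then have "(r n)\<^sup>2 = 1" using \<sigma> by (auto simp: r_def)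
      then show "n \<in> {..<N}" using N[of n] by (cases "n \<ge> N") auto
    qed
    then show False using Sinf finite_subset by blast
  qed
qed

lemma arctan_b2: "\<bar>arctan x\<bar> * 2 \<le> pi"
  using arctan_bounded[of x] by (auto simp: abs_le_iff)

lemma arctan_lim:
  assumes Q: "prob_space Q" and S: "sets Q = sets (borel :: real measure)"
  shows "(\<lambda>k. \<integral>z. arctan (z + real k) \<partial>Q) \<longlonglongrightarrow> pi/2"
    and "(\<lambda>k. \<integral>z. arctan (z - real k) \<partial>Q) \<longlonglongrightarrow> -(pi/2)"
proof -
  interpret prob_space Q by (rule Q)
  have mQ: "f \<in> borel_measurable Q" if "f \<in> borel_measurable borel" for f :: "real \<Rightarrow> real"
    by (subst measurable_cong_sets[OF S refl]) (rule that)
  have at_b: "norm (arctan x) \<le> pi/2" for x using arctan_bounded[of x] by auto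
  have "(\<lambda>k. \<integral>z. arctan (z + real k) \<partial>Q) \<longlonglongrightarrow> (\<integral>z. pi/2 \<partial>Q)"
  proof (rule integral_dominated_convergence[where w="\<lambda>_. pi/2"])
    show "AE z in Q. (\<lambda>k. arctan (z + real k)) \<longlonglongrightarrow> pi/2"
    proof (rule AE_I2)
      fix z :: real
      have "filterlim (\<lambda>k. z + real k) at_top sequentially"
        by (rule filterlim_tendsto_add_at_top[OF tendsto_const filterlim_real_sequentially])
      then show "(\<lambda>k. arctan (z + real k)) \<longlonglongrightarrow> pi/2"
        by (rule filterlim_compose[OF tendsto_arctan_at_top])
    qed
  qed (auto intro!: mQ simp: at_b arctan_b2)
  then show "(\<lambda>k. \<integral>z. arctan (z + real k) \<partial>Q) \<longlonglongrightarrow> pi/2" by (simp add: prob_space)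
  have "(\<lambda>k. \<integral>z. arctan (z - real k) \<partial>Q) \<longlonglongrightarrow> (\<integral>z. -(pi/2) \<partial>Q)"
  proof (rule integral_dominated_convergence[where w="\<lambda>_. pi/2"])
    show "AE z in Q. (\<lambda>k. arctan (z - real k)) \<longlonglongrightarrow> -(pi/2)"
    proof (rule AE_I2)
      fix z :: real
      have "filterlim (\<lambda>k. z - real k) at_bot sequentially"
      proof (subst filterlim_uminus_at_bot)
        have "LIM k sequentially. (-z) + real k :> at_top"
          by (rule filterlim_tendsto_add_at_top[OF tendsto_const filterlim_real_sequentially])
        then show "LIM k sequentially. - (z - real k) :> at_top" by simp
      qed
      then show "(\<lambda>k. arctan (z - real k)) \<longlonglongrightarrow> -(pi/2)"
        by (rule filterlim_compose[OF tendsto_arctan_at_bot])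
    qed
  qed (auto intro!: mQ simp: at_b arctan_b2)
  then show "(\<lambda>k. \<integral>z. arctan (z - real k) \<partial>Q) \<longlonglongrightarrow> -(pi/2)" by (simp add: prob_space)
qed

lemma arctan_int_strict:
  assumes P: "prob_space P" and S: "sets P = sets (borel :: real measure)"
  shows "(\<integral>z. arctan z \<partial>P) < pi/2" and "-(pi/2) < (\<integral>z. arctan z \<partial>P)"
proof -
  interpret prob_space P by (rule P)
  have mP: "f \<in> borel_measurable P" if "f \<in> borel_measurable borel" for f :: "real \<Rightarrow> real"
    by (subst measurable_cong_sets[OF S refl]) (rule that)
  have ia: "integrable P arctan"
    by (rule integrable_const_bound[where B="pi/2"]) (auto intro!: mP simp: arctan_b2)
  have "0 < (\<integral>z. pi/2 - arctan z \<partial>P)"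
  proof (rule integral_pos[OF P _ _, where B=pi])
    fix x show "\<bar>pi/2 - arctan x\<bar> \<le> pi" "pi/2 - arctan x > 0"
      using arctan_bounded[of x] by (auto simp: abs_le_iff)
  qed (auto intro!: mP)
  then show "(\<integral>z. arctan z \<partial>P) < pi/2" using ia by (simp add: prob_space)
  have "0 < (\<integral>z. arctan z + pi/2 \<partial>P)"
  proof (rule integral_pos[OF P _ _, where B=pi])
    fix x show "\<bar>arctan x + pi/2\<bar> \<le> pi" "arctan x + pi/2 > 0"
      using arctan_bounded[of x] by (auto simp: abs_le_iff)
  qed (auto intro!: mP)
  then show "-(pi/2) < (\<integral>z. arctan z \<partial>P)" using ia by (simp add: prob_space)
qed

lemma mQ_gen:
  assumes S: "sets Q = sets (borel :: real measure)" and f: "f \<in> borel_measurable borel"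
  shows "f \<in> borel_measurable Q"
  by (subst measurable_cong_sets[OF S refl]) (rule f)

lemma integral_shift:
  fixes h :: "real \<Rightarrow> real"
  assumes S: "sets Q = sets (borel :: real measure)" and hm: "h \<in> borel_measurable borel"
  shows "(\<integral>z. h z \<partial>distr Q borel (\<lambda>z. z + c)) = (\<integral>z. h (z + c) \<partial>Q)"
  by (rule integral_distr) (auto intro!: mQ_gen[OF S] simp: hm)

lemma part1_log:
  assumes P: "prob_space P" and SP: "sets P = sets (borel :: real measure)"
    and Q: "prob_space Q" and SQ: "sets Q = sets (borel :: real measure)"
    and eq: "distr Q borel (\<lambda>z. z + c) = P"
  shows "summable (\<lambda>n. (1 - exp (ll n - c))\<^sup>2) \<or> testable P Q ll"
proof -
  obtain \<kappa> where \<kappa>: "\<kappa> > 0"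
    and K: "\<And>s. \<kappa> * (clip s)\<^sup>2 \<le> clip s * ((\<integral>z. arctan (z + s) \<partial>P) - (\<integral>z. arctan z \<partial>P))"
    using arctan_core[OF P SP] by blast
  have key: "(\<integral>z. arctan (z + ll n) \<partial>Q) = (\<integral>z. arctan (z + (ll n - c)) \<partial>P)" for n
  proof -
    have "(\<integral>z. arctan (z + (ll n - c)) \<partial>P) = (\<integral>z. arctan (z + (ll n - c)) \<partial>distr Q borel (\<lambda>z. z + c))"
      by (simp add: eq)
    also have "\<dots> = (\<integral>z. arctan (z + c + (ll n - c)) \<partial>Q)"
      by (rule integral_shift[OF SQ]) simp
    finally show ?thesis by simp
  qed
  show ?thesis
  proof (cases "summable (\<lambda>n. (clip (ll n - c))\<^sup>2)")
    case True
    then show ?thesis using exp_clip[of "\<lambda>n. ll n - c"] by simp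
  next
    case False
    have "testable P Q ll"
      unfolding testable_def
    proof (intro exI conjI allI)
      show "arctan \<in> borel_measurable borel" by simp
      show "\<bar>arctan z\<bar> \<le> pi/2" for z using arctan_bounded[of z] by auto
      show "\<kappa> > 0" by (rule \<kappa>)
      show "\<kappa> * (clip (ll n - c))\<^sup>2 \<le> clip (ll n - c) * ((\<integral>z. arctan (z + ll n) \<partial>Q) - (\<integral>z. arctan z \<partial>P))" for n
        unfolding key by (rule K)
      show "\<not> summable (\<lambda>n. (clip (ll n - c))\<^sup>2)" by (rule False)
    qed
    then show ?thesis by simp
  qed
qed

lemma subseq_test:
  fixes h :: "real \<Rightarrow> real" and f :: "nat \<Rightarrow> nat"
  assumes P: "prob_space P" and SP: "sets P = sets (borel :: real measure)"
    and Q: "prob_space Q" and SQ: "sets Q = sets (borel :: real measure)"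
    and hm: "h \<in> borel_measurable borel" and hb: "\<And>z. \<bar>h z\<bar> \<le> B" and hc: "\<And>x. isCont h x"
    and f: "strict_mono f" and lim: "(\<lambda>k. ll (f k)) \<longlonglongrightarrow> c"
    and ne: "(\<integral>z. h z \<partial>distr Q borel (\<lambda>z. z + c)) \<noteq> (\<integral>z. h z \<partial>P)"
  shows "testable P Q ll"
proof -
  interpret Q: prob_space Q by (rule Q)
  note hm[measurable]
  define G where "G x = (\<integral>z. h (z + x) \<partial>Q)" for x
  define p where "p = (\<integral>z. h z \<partial>P)"
  have Gc: "(\<integral>z. h z \<partial>distr Q borel (\<lambda>z. z + c)) = G c"
    unfolding G_def by (rule integral_shift[OF SQ hm])
  have GL: "(\<lambda>k. G (ll (f k))) \<longlonglongrightarrow> G c"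
    unfolding G_def
  proof (rule integral_dominated_convergence[where w="\<lambda>_. B"])
    show "AE z in Q. (\<lambda>k. h (z + ll (f k))) \<longlonglongrightarrow> h (z + c)"
    proof (rule AE_I2)
      fix z
      have "(\<lambda>k. z + ll (f k)) \<longlonglongrightarrow> z + c" by (intro tendsto_intros lim)
      then show "(\<lambda>k. h (z + ll (f k))) \<longlonglongrightarrow> h (z + c)" by (rule isCont_tendsto_compose[OF hc])
    qed
  qed (auto intro!: mQ_gen[OF SQ] simp: hb)
  define d where "d = G c - p"
  have d0: "d \<noteq> 0" using ne Gc unfolding d_def p_def by simp
  define \<sigma> :: real where "\<sigma> = (if d > 0 then 1 else -1)"
  define \<epsilon> where "\<epsilon> = \<bar>d\<bar> / 2"
  have \<epsilon>: "\<epsilon> > 0" using d0 unfolding \<epsilon>_def by simp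
  have "eventually (\<lambda>k. G (ll (f k)) > G c - \<epsilon>) sequentially"
    by (rule order_tendstoD(1)[OF GL]) (use \<epsilon> in simp)
  moreover have "eventually (\<lambda>k. G (ll (f k)) < G c + \<epsilon>) sequentially"
    by (rule order_tendstoD(2)[OF GL]) (use \<epsilon> in simp)
  ultimately have "eventually (\<lambda>k. G (ll (f k)) > G c - \<epsilon> \<and> G (ll (f k)) < G c + \<epsilon>) sequentially"
    by (rule eventually_conj)
  then obtain K where K: "\<And>k. k \<ge> K \<Longrightarrow> G (ll (f k)) > G c - \<epsilon> \<and> G (ll (f k)) < G c + \<epsilon>"
    by (auto simp: eventually_sequentially)
  define S where "S = {n. \<epsilon> \<le> \<sigma> * (G (ll n) - p)}"
  have sub: "f ` {K..} \<subseteq> S"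
  proof
    fix n assume "n \<in> f ` {K..}"
    then obtain k where k: "k \<ge> K" "n = f k" by auto
    from K[OF k(1)] show "n \<in> S"
      unfolding S_def \<sigma>_def \<epsilon>_def d_def using k(2) by (auto simp: abs_if field_simps)
  qed
  have "infinite (f ` {K..})"
  proof
    assume "finite (f ` {K..})"
    then have "finite {K..}" using finite_imageD strict_mono_imp_inj_on[OF f] inj_on_subset by blast
    then show False using infinite_Ici by blast
  qed
  then have Sinf: "infinite S" using sub finite_subset by blast
  show ?thesis
  proof (rule inf_test[OF hm hb Sinf \<epsilon>])
    show "\<sigma> = 1 \<or> \<sigma> = -1" unfolding \<sigma>_def by simp
    show "\<epsilon> \<le> \<sigma> * ((\<integral>z. h (z + ll n) \<partial>Q) - (\<integral>z. h z \<partial>P))" if "n \<in> S" for n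
      using that unfolding S_def G_def p_def by simp
  qed
qed

lemma part2_log:
  assumes P: "prob_space P" and SP: "sets P = sets (borel :: real measure)"
    and Q: "prob_space Q" and SQ: "sets Q = sets (borel :: real measure)"
  shows "(\<exists>c. distr Q borel (\<lambda>z. z + c) = P) \<or> testable P Q ll"
proof -
  interpret Q: prob_space Q by (rule Q)
  have am: "arctan \<in> borel_measurable borel" by simp
  have ab: "\<bar>arctan z\<bar> \<le> pi/2" for z using arctan_bounded[of z] by auto
  define p where "p = (\<integral>z. arctan z \<partial>P)"
  have mono: "(\<integral>z. arctan (z + a) \<partial>Q) \<le> (\<integral>z. arctan (z + b) \<partial>Q)" if "a \<le> b" for a b
  proof (rule integral_mono)
    show "integrable Q (\<lambda>z. arctan (z + a))"
      by (rule Q.integrable_const_bound[where B="pi/2"]) (auto intro!: mQ_gen[OF SQ] simp: arctan_b2)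
    show "integrable Q (\<lambda>z. arctan (z + b))"
      by (rule Q.integrable_const_bound[where B="pi/2"]) (auto intro!: mQ_gen[OF SQ] simp: arctan_b2)
    show "arctan (x + a) \<le> arctan (x + b)" for x using that by (simp add: arctan_le_iff)
  qed
  consider (up) "\<forall>M. \<exists>n. M < ll n" | (down) "\<forall>M. \<exists>n. ll n < M"
    | (bdd) M1 M2 where "\<forall>n. ll n \<le> M1" "\<forall>n. M2 \<le> ll n"
    by (meson not_le)
  then show ?thesis
  proof cases
    case up
    define \<epsilon> where "\<epsilon> = (pi/2 - p) / 2"
    have \<epsilon>: "\<epsilon> > 0" using arctan_int_strict(1)[OF P SP] unfolding \<epsilon>_def p_def by simp
    have "eventually (\<lambda>k. (\<integral>z. arctan (z + real k) \<partial>Q) > p + \<epsilon>) sequentially"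
    proof (rule order_tendstoD(1)[OF arctan_lim(1)[OF Q SQ]])
      have "p < pi/2" using arctan_int_strict(1)[OF P SP] unfolding p_def .
      then show "p + \<epsilon> < pi/2" unfolding \<epsilon>_def by (simp add: field_simps)
    qed
    then obtain k where k: "(\<integral>z. arctan (z + real k) \<partial>Q) > p + \<epsilon>"
      by (auto simp: eventually_sequentially)
    define S where "S = {n. real k \<le> ll n}"
    have Sinf: "infinite S"
    proof
      assume fin: "finite S"
      define B where "B = max (real k) (Max (ll ` S) + 1)"
      obtain n where n: "B < ll n" using up by blast
      show False
      proof (cases "n \<in> S")
        case True
        then have "ll n \<le> Max (ll ` S)" using fin by (intro Max_ge) auto
        then show False using n unfolding B_def by linarith
      next
        case False
        then have "ll n < real k" unfolding S_def by simp
        then show False using n unfolding B_def by linarith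
      qed
    qed
    have "testable P Q ll"
    proof (rule inf_test[OF am ab Sinf \<epsilon>, where \<sigma>=1])
      fix n assume "n \<in> S"
      then have "(\<integral>z. arctan (z + real k) \<partial>Q) \<le> (\<integral>z. arctan (z + ll n) \<partial>Q)"
        unfolding S_def by (intro mono) simp
      then show "\<epsilon> \<le> 1 * ((\<integral>z. arctan (z + ll n) \<partial>Q) - (\<integral>z. arctan z \<partial>P))"
        using k unfolding p_def by simp
    qed simp
    then show ?thesis by simp
  next
    case down
    define \<epsilon> where "\<epsilon> = (p + pi/2) / 2"
    have \<epsilon>: "\<epsilon> > 0" using arctan_int_strict(2)[OF P SP] unfolding \<epsilon>_def p_def by simp
    have "eventually (\<lambda>k. (\<integral>z. arctan (z - real k) \<partial>Q) < p - \<epsilon>) sequentially"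
    proof (rule order_tendstoD(2)[OF arctan_lim(2)[OF Q SQ]])
      have "-(pi/2) < p" using arctan_int_strict(2)[OF P SP] unfolding p_def .
      then show "-(pi/2) < p - \<epsilon>" unfolding \<epsilon>_def by (simp add: field_simps)
    qed
    then obtain k where k: "(\<integral>z. arctan (z - real k) \<partial>Q) < p - \<epsilon>"
      by (auto simp: eventually_sequentially)
    define S where "S = {n. ll n \<le> - real k}"
    have Sinf: "infinite S"
    proof
      assume fin: "finite S"
      define B where "B = min (- real k) (Min (ll ` S) - 1)"
      obtain n where n: "ll n < B" using down by blast
      show False
      proof (cases "n \<in> S")
        case True
        then have "Min (ll ` S) \<le> ll n" using fin by (intro Min_le) auto
        then show False using n unfolding B_def by linarith
      next
        case False
        then have "- real k < ll n" unfolding S_def by simp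
        then show False using n unfolding B_def by linarith
      qed
    qed
    have "testable P Q ll"
    proof (rule inf_test[OF am ab Sinf \<epsilon>, where \<sigma>="-1"])
      fix n assume "n \<in> S"
      then have "(\<integral>z. arctan (z + ll n) \<partial>Q) \<le> (\<integral>z. arctan (z + - real k) \<partial>Q)"
        unfolding S_def by (intro mono) simp
      then show "\<epsilon> \<le> -1 * ((\<integral>z. arctan (z + ll n) \<partial>Q) - (\<integral>z. arctan z \<partial>P))"
        using k unfolding p_def by simp
    qed simp
    then show ?thesis by simp
  next
    case bdd
    have "Bseq ll"
    proof (rule BseqI'[where K="max \<bar>M1\<bar> \<bar>M2\<bar>"])
      fix n
      have "ll n \<le> M1" "M2 \<le> ll n" using bdd by auto
      then show "norm (ll n) \<le> max \<bar>M1\<bar> \<bar>M2\<bar>" by (simp add: abs_le_iff) linarith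
    qed
    obtain f where f: "strict_mono f" "monoseq (\<lambda>n. ll (f n))" using seq_monosub by blast
    have "convergent (\<lambda>n. ll (f n))"
      by (rule Bseq_monoseq_convergent[OF Bseq_subseq[OF \<open>Bseq ll\<close>] f(2)])
    then obtain c where lim: "(\<lambda>n. ll (f n)) \<longlonglongrightarrow> c" by (auto simp: convergent_def)
    show ?thesis
    proof (cases "distr Q borel (\<lambda>z. z + c) = P")
      case True then show ?thesis by blast
    next
      case False
      have rd1: "real_distribution (distr Q borel (\<lambda>z. z + c))"
        by (rule real_distribution.intro, rule Q.prob_space_distr) (auto simp: real_distribution_axioms_def intro!: mQ_gen[OF SQ])
      have rd2: "real_distribution P"
        by (rule real_distribution.intro[OF P]) (simp add: real_distribution_axioms_def SP)
      have "char (distr Q borel (\<lambda>z. z + c)) \<noteq> char P"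
        using False Levy_uniqueness[OF rd1 rd2] by blast
      then obtain \<omega> where \<omega>: "char (distr Q borel (\<lambda>z. z + c)) \<omega> \<noteq> char P \<omega>" by blast
      have ie: "iexp t = cis t" for t by (simp add: cis_conv_exp)
      have ReC: "Re (char M \<omega>) = (\<integral>z. cos (\<omega> * z) \<partial>M)" if "real_distribution M" for M
      proof -
        interpret real_distribution M by (rule that)
        have "integrable M (\<lambda>x. iexp (\<omega> * x))" by (rule integrable_iexp) auto
        then have ii: "integrable M (\<lambda>x. cis (\<omega> * x))" by (simp add: cis_conv_exp)
        have "(\<integral>z. cos (\<omega> * z) \<partial>M) = (\<integral>z. Re (cis (\<omega> * z)) \<partial>M)" by simp
        also have "\<dots> = Re (CLINT z|M. cis (\<omega> * z))" by (rule integral_Re[OF ii])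
        finally have eq: "(\<integral>z. cos (\<omega> * z) \<partial>M) = Re (CLINT z|M. cis (\<omega> * z))" .
        show ?thesis unfolding char_def ie eq ..
      qed
      have ImC: "Im (char M \<omega>) = (\<integral>z. sin (\<omega> * z) \<partial>M)" if "real_distribution M" for M
      proof -
        interpret real_distribution M by (rule that)
        have "integrable M (\<lambda>x. iexp (\<omega> * x))" by (rule integrable_iexp) auto
        then have ii: "integrable M (\<lambda>x. cis (\<omega> * x))" by (simp add: cis_conv_exp)
        have "(\<integral>z. sin (\<omega> * z) \<partial>M) = (\<integral>z. Im (cis (\<omega> * z)) \<partial>M)" by simp
        also have "\<dots> = Im (CLINT z|M. cis (\<omega> * z))" by (rule integral_Im[OF ii])
        finally have eq: "(\<integral>z. sin (\<omega> * z) \<partial>M) = Im (CLINT z|M. cis (\<omega> * z))" .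
        show ?thesis unfolding char_def ie eq ..
      qed
      have "Re (char (distr Q borel (\<lambda>z. z + c)) \<omega>) \<noteq> Re (char P \<omega>) \<or>
            Im (char (distr Q borel (\<lambda>z. z + c)) \<omega>) \<noteq> Im (char P \<omega>)"
        using \<omega> complex_eqI by blast
      then show ?thesis
      proof
        assume "Re (char (distr Q borel (\<lambda>z. z + c)) \<omega>) \<noteq> Re (char P \<omega>)"
        then have ne: "(\<integral>z. cos (\<omega> * z) \<partial>distr Q borel (\<lambda>z. z + c)) \<noteq> (\<integral>z. cos (\<omega> * z) \<partial>P)"
          unfolding ReC[OF rd1] ReC[OF rd2] .
        have "testable P Q ll"
          by (rule subseq_test[OF P SP Q SQ _ _ _ f(1) lim ne, where B=1]) (auto intro!: continuous_intros)
        then show ?thesis by simp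
      next
        assume "Im (char (distr Q borel (\<lambda>z. z + c)) \<omega>) \<noteq> Im (char P \<omega>)"
        then have ne: "(\<integral>z. sin (\<omega> * z) \<partial>distr Q borel (\<lambda>z. z + c)) \<noteq> (\<integral>z. sin (\<omega> * z) \<partial>P)"
          unfolding ImC[OF rd1] ImC[OF rd2] .
        have "testable P Q ll"
          by (rule subseq_test[OF P SP Q SQ _ _ _ f(1) lim ne, where B=1]) (auto intro!: continuous_intros)
        then show ?thesis by simp
      qed
    qed
  qed
qed

lemma main_gen:
  fixes u v :: "nat \<Rightarrow> 'a::{real_normed_field, second_countable_topology}"
  assumes stp: "thm611_setup u v \<mu>u \<mu>v"
  shows "((\<forall>a. a \<noteq> 0 \<longrightarrow>
          (\<forall>A \<in> sets borel. measure (\<mu>v 0) A = measure (\<mu>u 0) ((\<lambda>x. a * x) ` A)) \<longrightarrow>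
          summable (\<lambda>n. (1 - norm (inverse a * lam u v (Suc n)))\<^sup>2)) \<and>
       ((\<integral>\<^sup>+ t. indicator (- {0}) t * ennreal ((ln (norm t))\<^sup>2) \<partial>(\<mu>u 0)) < \<infinity> \<longrightarrow>
        (\<integral>\<^sup>+ t. indicator (- {0}) t * ennreal ((ln (norm t))\<^sup>2) \<partial>(\<mu>v 0)) < \<infinity> \<longrightarrow>
        (\<exists>a. a \<noteq> 0 \<and> summable (\<lambda>n. (1 - norm (inverse a * lam u v (Suc n)))\<^sup>2))))"
proof -
  have nzu: "\<forall>n\<ge>1. u n \<noteq> 0" and nzv: "\<forall>n\<ge>1. v n \<noteq> 0"
    and Pu: "\<And>n. prob_space (\<mu>u n)" and Su: "\<And>n. sets (\<mu>u n) = sets borel"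
    and Pv: "\<And>n. prob_space (\<mu>v n)" and Sv: "\<And>n. sets (\<mu>v n) = sets borel"
    and invu: "shift_invariant u (PiM UNIV \<mu>u)" and invv: "shift_invariant v (PiM UNIV \<mu>v)"
    and zu: "emeasure (\<mu>u 0) {0} = 0" and zv: "emeasure (\<mu>v 0) {0} = 0"
    and nms: "\<not> mutually_singular (PiM UNIV \<mu>u) (PiM UNIV \<mu>v)"
    using stp unfolding thm611_setup_def by auto
  define P where "P = distr (\<mu>u 0) borel (\<lambda>x. ln (norm x))"
  define Q where "Q = distr (\<mu>v 0) borel (\<lambda>x. ln (norm x))"
  define ll where "ll n = ln (norm (lam u v n))" for n
  have mu0: "f \<in> borel_measurable (\<mu>u 0)" if "f \<in> borel_measurable borel" for f :: "'a \<Rightarrow> 'b::topological_space"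
    by (subst measurable_cong_sets[OF Su refl]) (rule that)
  have mv0: "f \<in> borel_measurable (\<mu>v 0)" if "f \<in> borel_measurable borel" for f :: "'a \<Rightarrow> 'b::topological_space"
    by (subst measurable_cong_sets[OF Sv refl]) (rule that)
  have PP: "prob_space P" unfolding P_def
    by (rule prob_space.prob_space_distr[OF Pu]) (auto intro!: mu0)
  have SP: "sets P = sets (borel :: real measure)" unfolding P_def by simp
  have QP: "prob_space Q" unfolding Q_def
    by (rule prob_space.prob_space_distr[OF Pv]) (auto intro!: mv0)
  have SQ: "sets Q = sets (borel :: real measure)" unfolding Q_def by simp
  have nt: "\<not> testable P Q ll"
  proof
    assume "testable P Q ll"
    then obtain h C r \<kappa> where hm: "h \<in> borel_measurable borel" and hb: "\<And>z. \<bar>h z\<bar> \<le> C"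
      and \<kappa>: "(\<kappa>::real) > 0"
      and sep: "\<And>n. \<kappa> * (r n)\<^sup>2 \<le> r n * ((\<integral>z. h (z + ll n) \<partial>Q) - (\<integral>z. h z \<partial>P))"
      and ns: "\<not> summable (\<lambda>n. (r n)\<^sup>2)"
      unfolding testable_def by blast
    have "mutually_singular (PiM UNIV \<mu>u) (PiM UNIV \<mu>v)"
      by (rule log_sep[OF Pu Su invu nzu zu Pv Sv invv nzv zv hm hb \<kappa> _ ns])
         (use sep in \<open>simp add: P_def Q_def ll_def\<close>)
    with nms show False by simp
  qed
  have lam_nz: "lam u v n \<noteq> 0" for n
    unfolding lam_UU using UU_nz[OF nzu] UU_nz[OF nzv] by simp
  have conv: "summable (\<lambda>n. (1 - norm (inverse a * lam u v (Suc n)))\<^sup>2)"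
    if a: "a \<noteq> 0" and s: "summable (\<lambda>n. (1 - exp (ll n - ln (norm a)))\<^sup>2)" for a :: 'a
  proof -
    have "norm (inverse a * lam u v n) = exp (ll n - ln (norm a))" for n
    proof -
      have "exp (ll n - ln (norm a)) = exp (ll n) / exp (ln (norm a))" by (rule exp_diff)
      also have "\<dots> = norm (lam u v n) / norm a" using lam_nz[of n] a by (simp add: ll_def)
      also have "\<dots> = norm (inverse a * lam u v n)" by (simp add: norm_mult norm_inverse divide_inverse mult.commute)
      finally show ?thesis by simp
    qed
    then have "summable (\<lambda>n. (1 - norm (inverse a * lam u v n))\<^sup>2)" using s by simp
    then show ?thesis by (rule summable_ignore_initial_segment[where k=1, simplified])
  qed
  have part1: "summable (\<lambda>n. (1 - norm (inverse a * lam u v (Suc n)))\<^sup>2)"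
    if a: "a \<noteq> 0" and H: "\<forall>A \<in> sets borel. measure (\<mu>v 0) A = measure (\<mu>u 0) ((\<lambda>x. a * x) ` A)" for a :: 'a
  proof -
    interpret U0: prob_space "\<mu>u 0" by (rule Pu)
    interpret V0: prob_space "\<mu>v 0" by (rule Pv)
    have spu: "space (\<mu>u 0) = UNIV" using sets_eq_imp_space_eq[OF Su[of 0]] by simp
    have dm: "(\<lambda>x. x / a) \<in> borel_measurable (\<mu>u 0)" by (rule mu0) simp
    have V0eq: "\<mu>v 0 = distr (\<mu>u 0) borel (\<lambda>x. x / a)"
    proof (rule measure_eqI)
      show "sets (\<mu>v 0) = sets (distr (\<mu>u 0) borel (\<lambda>x. x / a))" using Sv by simp
      fix A assume "A \<in> sets (\<mu>v 0)"
      then have A: "A \<in> sets borel" using Sv by simp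
      have img: "(\<lambda>x. a * x) ` A = (\<lambda>x. x / a) -` A \<inter> space (\<mu>u 0)"
      proof (rule set_eqI)
        fix x show "x \<in> (\<lambda>x. a * x) ` A \<longleftrightarrow> x \<in> (\<lambda>x. x / a) -` A \<inter> space (\<mu>u 0)"
        proof
          assume "x \<in> (\<lambda>x. a * x) ` A"
          then obtain y where "y \<in> A" "x = a * y" by auto
          then show "x \<in> (\<lambda>x. x / a) -` A \<inter> space (\<mu>u 0)" using a by (simp add: spu)
        next
          assume "x \<in> (\<lambda>x. x / a) -` A \<inter> space (\<mu>u 0)"
          then have "x / a \<in> A" by simp
          moreover have "x = a * (x / a)" using a by simp
          ultimately show "x \<in> (\<lambda>x. a * x) ` A" by (rule rev_image_eqI)
        qed
      qed
      have mA: "(\<lambda>x. x / a) -` A \<inter> space (\<mu>u 0) \<in> sets (\<mu>u 0)"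
        using measurable_sets[OF dm A] .
      have "emeasure (\<mu>v 0) A = ennreal (measure (\<mu>v 0) A)" by (simp add: V0.emeasure_eq_measure)
      also have "measure (\<mu>v 0) A = measure (\<mu>u 0) ((\<lambda>x. x / a) -` A \<inter> space (\<mu>u 0))"
        using H A img by simp
      also have "ennreal (measure (\<mu>u 0) ((\<lambda>x. x / a) -` A \<inter> space (\<mu>u 0)))
          = emeasure (\<mu>u 0) ((\<lambda>x. x / a) -` A \<inter> space (\<mu>u 0))"
        by (simp add: U0.emeasure_eq_measure)
      also have "\<dots> = emeasure (distr (\<mu>u 0) borel (\<lambda>x. x / a)) A"
        by (rule emeasure_distr[symmetric, OF dm A])
      finally show "emeasure (\<mu>v 0) A = emeasure (distr (\<mu>u 0) borel (\<lambda>x. x / a)) A" .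
    qed
    define c where "c = ln (norm a)"
    have eq: "distr Q borel (\<lambda>z. z + c) = P"
    proof -
      have "distr Q borel (\<lambda>z. z + c) = distr (\<mu>v 0) borel ((\<lambda>z. z + c) \<circ> (\<lambda>x. ln (norm x)))"
        unfolding Q_def by (rule distr_distr) (auto intro!: mv0)
      also have "\<dots> = distr (distr (\<mu>u 0) borel (\<lambda>x. x / a)) borel ((\<lambda>z. z + c) \<circ> (\<lambda>x. ln (norm x)))"
        using V0eq by simp
      also have "\<dots> = distr (\<mu>u 0) borel ((\<lambda>z. z + c) \<circ> (\<lambda>x. ln (norm x)) \<circ> (\<lambda>x. x / a))"
        by (rule distr_distr) (auto intro!: mu0)
      also have "\<dots> = distr (\<mu>u 0) borel (\<lambda>x. ln (norm x))"
      proof (rule distr_cong_AE)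
        have N: "{0} \<in> null_sets (\<mu>u 0)" using zu Su[of 0] by (auto simp: null_sets_def)
        show "AE x in \<mu>u 0. ((\<lambda>z. z + c) \<circ> (\<lambda>x. ln (norm x)) \<circ> (\<lambda>x. x / a)) x = ln (norm x)"
        proof (rule AE_I'[OF N])
          have "ln (norm (x / a)) + c = ln (norm x)" if "x \<noteq> 0" for x
          proof -
            have "ln (norm (x / a)) = ln (norm x / norm a)" by (simp add: norm_divide)
            also have "\<dots> = ln (norm x) - ln (norm a)" using that a by (simp add: ln_div)
            finally show ?thesis unfolding c_def by simp
          qed
          then show "{x \<in> space (\<mu>u 0). \<not> ((\<lambda>z. z + c) \<circ> (\<lambda>x. ln (norm x)) \<circ> (\<lambda>x. x / a)) x = ln (norm x)} \<subseteq> {0}"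
            by auto
        qed
      qed (auto intro!: mu0)
      finally show ?thesis unfolding P_def .
    qed
    have "summable (\<lambda>n. (1 - exp (ll n - c))\<^sup>2) \<or> testable P Q ll"
      by (rule part1_log[OF PP SP QP SQ eq])
    with nt have "summable (\<lambda>n. (1 - exp (ll n - c))\<^sup>2)" by simp
    then show ?thesis using conv[OF a] unfolding c_def by simp
  qed
  have part2: "\<exists>a. a \<noteq> 0 \<and> summable (\<lambda>n. (1 - norm (inverse a * lam u v (Suc n)))\<^sup>2)"
  proof -
    from part2_log[OF PP SP QP SQ, of ll] nt obtain c where eq: "distr Q borel (\<lambda>z. z + c) = P" by blast
    define a :: 'a where "a = of_real (exp c)"
    have a: "a \<noteq> 0" unfolding a_def by simp
    have c: "ln (norm a) = c" unfolding a_def by simp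
    have "summable (\<lambda>n. (1 - exp (ll n - c))\<^sup>2) \<or> testable P Q ll"
      by (rule part1_log[OF PP SP QP SQ eq])
    with nt have "summable (\<lambda>n. (1 - exp (ll n - ln (norm a)))\<^sup>2)" by (simp add: c)
    with conv[OF a] a show ?thesis by blast
  qed
  show ?thesis using part1 part2 by blast
qed

theorem theorem6p11:
  shows
  "(\<forall>(u::nat \<Rightarrow> real) v \<mu>u \<mu>v. thm611_setup u v \<mu>u \<mu>v \<longrightarrow>
      ((\<forall>a. a \<noteq> 0 \<longrightarrow>
          (\<forall>A \<in> sets borel. measure (\<mu>v 0) A = measure (\<mu>u 0) ((\<lambda>x. a * x) ` A)) \<longrightarrow>
          summable (\<lambda>n. (1 - norm (inverse a * lam u v (Suc n)))\<^sup>2)) \<and>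
       ((\<integral>\<^sup>+ t. indicator (- {0}) t * ennreal ((ln (norm t))\<^sup>2) \<partial>(\<mu>u 0)) < \<infinity> \<longrightarrow>
        (\<integral>\<^sup>+ t. indicator (- {0}) t * ennreal ((ln (norm t))\<^sup>2) \<partial>(\<mu>v 0)) < \<infinity> \<longrightarrow>
        (\<exists>a. a \<noteq> 0 \<and> summable (\<lambda>n. (1 - norm (inverse a * lam u v (Suc n)))\<^sup>2)))))
   \<and>
   (\<forall>(u::nat \<Rightarrow> complex) v \<mu>u \<mu>v. thm611_setup u v \<mu>u \<mu>v \<longrightarrow>
      ((\<forall>a. a \<noteq> 0 \<longrightarrow>
          (\<forall>A \<in> sets borel. measure (\<mu>v 0) A = measure (\<mu>u 0) ((\<lambda>x. a * x) ` A)) \<longrightarrow>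
          summable (\<lambda>n. (1 - norm (inverse a * lam u v (Suc n)))\<^sup>2)) \<and>
       ((\<integral>\<^sup>+ t. indicator (- {0}) t * ennreal ((ln (norm t))\<^sup>2) \<partial>(\<mu>u 0)) < \<infinity> \<longrightarrow>
        (\<integral>\<^sup>+ t. indicator (- {0}) t * ennreal ((ln (norm t))\<^sup>2) \<partial>(\<mu>v 0)) < \<infinity> \<longrightarrow>
        (\<exists>a. a \<noteq> 0 \<and> summable (\<lambda>n. (1 - norm (inverse a * lam u v (Suc n)))\<^sup>2)))))"
  using main_gen[where 'a=real] main_gen[where 'a=complex] by blast

end
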